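(* Let $\boldsymbol\pi\in H_{1,2,2}$ be a primary prime quaternion and $p=N(\boldsymbol\pi)$. Then the p-conjugate $\overline{\boldsymbol\pi}_p$ equals $\overline{\boldsymbol\pi}$ if $p\equiv1\pmod4$ and equals $-\overline{\boldsymbol\pi}$ if $p\equiv-1\pmod4$.
   Context: Let $\mathbf{i},\mathbf{j},\mathbf{k}$ be the standard quaternion units; $\overline{\mathbf{q}}$ is quaternion conjugation and $N(\mathbf{q})=\mathbf{q}\overline{\mathbf{q}}$. $H_{1,2,2}$ is the subring of the quaternions equal to the $\mathbb{Z}$-module generated by $\mathbf{v}_1=1$, $\mathbf{v}_2=\mathbf{i}$, $\mathbf{v}_3=\tfrac12(1+\mathbf{i}+\sqrt2\,\mathbf{j})$, $\mathbf{v}_4=\tfrac12(1+\mathbf{i}+\sqrt2\,\mathbf{k})$. A prime of $H_{1,2,2}$ is a nonzero non-invertible element $\boldsymbol\pi$ such that any factorization $\boldsymbol\pi=\mathbf{a}\mathbf{b}$ in $H_{1,2,2}$ has $\mathbf{a}$ or $\mathbf{b}$ invertible. Let $I=2(1+\mathbf{i})H_{1,2,2}$ (equal to $H_{1,2,2}\,2(1+\mathbf{i})$). An element $\mathbf{q}\in H_{1,2,2}$ is primary if $\mathbf{q}-1\in I$ or $\mathbf{q}-(1+2\mathbf{v}_3)\in I$. For a primary prime $\boldsymbol\pi$, its p-conjugate is $\overline{\boldsymbol\pi}_p=\overline{\boldsymbol\pi}$ if $\boldsymbol\pi-1\in I$ and $\overline{\boldsymbol\pi}_p=-\overline{\boldsymbol\pi}$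 if $\boldsymbol\pi-(1+2\mathbf{v}_3)\in I$. *)

theory Defs
  imports Complex_Main "HOL-Number_Theory.Cong"
begin

datatype quat = Quat (Re: real) (Im1: real) (Im2: real) (Im3: real)

definition qadd :: "quat \<Rightarrow> quat \<Rightarrow> quat" where
  "qadd x y = Quat (Re x + Re y) (Im1 x + Im1 y) (Im2 x + Im2 y) (Im3 x + Im3 y)"

definition qsub :: "quat \<Rightarrow> quat \<Rightarrow> quat" where
  "qsub x y = Quat (Re x - Re y) (Im1 x - Im1 y) (Im2 x - Im2 y) (Im3 x - Im3 y)"

definition qneg :: "quat \<Rightarrow> quat" where
  "qneg x = Quat (- Re x) (- Im1 x) (- Im2 x) (- Im3 x)"

definition qscale :: "real \<Rightarrow> quat \<Rightarrow> quat" where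
  "qscale r x = Quat (r * Re x) (r * Im1 x) (r * Im2 x) (r * Im3 x)"

text \<open>Hamilton product (i^2 = j^2 = k^2 = ijk = -1).\<close>
definition qmult :: "quat \<Rightarrow> quat \<Rightarrow> quat" where
  "qmult x y = Quat
     (Re x * Re y - Im1 x * Im1 y - Im2 x * Im2 y - Im3 x * Im3 y)
     (Re x * Im1 y + Im1 x * Re y + Im2 x * Im3 y - Im3 x * Im2 y)
     (Re x * Im2 y - Im1 x * Im3 y + Im2 x * Re y + Im3 x * Im1 y)
     (Re x * Im3 y + Im1 x * Im2 y - Im2 x * Im1 y + Im3 x * Re y)"

definition qconj :: "quat \<Rightarrow> quat" where
  "qconj x = Quat (Re x) (- Im1 x) (- Im2 x) (- Im3 x)"

definition qone :: quat where "qone = Quat 1 0 0 0"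
definition qzero :: quat where "qzero = Quat 0 0 0 0"
definition qi :: quat where "qi = Quat 0 1 0 0"
definition qj :: quat where "qj = Quat 0 0 1 0"
definition qk :: quat where "qk = Quat 0 0 0 1"

text \<open>Norm N(q) = q * conj q (a real quaternion); we record its real part.\<close>
definition qnorm :: "quat \<Rightarrow> real" where
  "qnorm q = Re (qmult q (qconj q))"

definition v1 :: quat where "v1 = qone"
definition v2 :: quat where "v2 = qi"
definition v3 :: quat where "v3 = qscale (1/2) (qadd (qadd qone qi) (qscale (sqrt 2) qj))"
definition v4 :: quat where "v4 = qscale (1/2) (qadd (qadd qone qi) (qscale (sqrt 2) qk))"

definition H122 :: "quat set" where
  "H122 = {qadd (qadd (qscale (of_int a) v1) (qscale (of_int b) v2))
                (qadd (qscale (of_int c) v3) (qscale (of_int d) v4)) | a b c d :: int. True}"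

definition H_unit :: "quat \<Rightarrow> bool" where
  "H_unit u \<longleftrightarrow> u \<in> H122 \<and> (\<exists>w \<in> H122. qmult u w = qone \<and> qmult w u = qone)"

definition H_prime :: "quat \<Rightarrow> bool" where
  "H_prime p \<longleftrightarrow> p \<in> H122 \<and> p \<noteq> qzero \<and> \<not> H_unit p \<and>
     (\<forall>a \<in> H122. \<forall>b \<in> H122. p = qmult a b \<longrightarrow> H_unit a \<or> H_unit b)"

definition I_ideal :: "quat set" where
  "I_ideal = {qmult (qscale 2 (qadd qone qi)) x | x. x \<in> H122}"

definition primary :: "quat \<Rightarrow> bool" where
  "primary q \<longleftrightarrow> q \<in> H122 \<and>
     (qsub q qone \<in> I_ideal \<or> qsub q (qadd qone (qscale 2 v3)) \<in> I_ideal)"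

definition pconj :: "quat \<Rightarrow> quat" where
  "pconj q = (if qsub q qone \<in> I_ideal then qconj q else qneg (qconj q))"

end

theory Submission
  imports Defs
begin

lemma H122_form:
  assumes "x \<in> H122"
  shows "\<exists>(e::int) (f::int) (g::int) (h::int). x = Quat (e + (g+h)/2) (f + (g+h)/2) (g * sqrt 2 / 2) (h * sqrt 2 / 2)"
proof -
  from assms obtain a b c d :: int where
    x: "x = qadd (qadd (qscale (of_int a) v1) (qscale (of_int b) v2))
                (qadd (qscale (of_int c) v3) (qscale (of_int d) v4))"
    unfolding H122_def by blast
  show ?thesis
    apply (rule exI[of _ a], rule exI[of _ b], rule exI[of _ c], rule exI[of _ d])
    apply (simp add: x qadd_def qscale_def v1_def v2_def v3_def v4_def qone_def qi_def qj_def qk_def)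
    done
qed

lemma norm_gen:
  fixes e f g h r u0 u1 u2 :: real
  assumes r: "r * r = 2"
  shows "qnorm (qadd (Quat u0 u1 (u2 * r) 0) (qmult (qscale 2 (qadd qone qi))
     (Quat (e + (g+h)/2) (f + (g+h)/2) (g * r / 2) (h * r / 2))))
   = u0*u0 + u1*u1 + 2*u2*u2 + 4*(u0*(e-f) + u1*(e+f+g+h) + u2*(g-h))
     + 8*(e*e+f*f+(e+f)*(g+h)+g*g+h*h+g*h)"
proof -
  have "qnorm (qadd (Quat u0 u1 (u2 * r) 0) (qmult (qscale 2 (qadd qone qi))
     (Quat (e + (g+h)/2) (f + (g+h)/2) (g * r / 2) (h * r / 2))))
    = (u0 + 2*(e-f))^2 + (u1 + 2*(e+f+g+h))^2 + (u2*r + (g-h)*r)^2 + ((g+h)*r)^2"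
    by (simp add: qnorm_def qadd_def qmult_def qscale_def qone_def qi_def qconj_def
        power2_eq_square algebra_simps)
  also have "\<dots> = (u0 + 2*(e-f))^2 + (u1 + 2*(e+f+g+h))^2 + (u2 + (g-h))^2*(r*r) + (g+h)^2*(r*r)"
    by (simp add: power2_eq_square algebra_simps)
  also have "\<dots> = u0*u0 + u1*u1 + 2*u2*u2 + 4*(u0*(e-f) + u1*(e+f+g+h) + u2*(g-h))
     + 8*(e*e+f*f+(e+f)*(g+h)+g*g+h*h+g*h)"
    unfolding r by (simp add: power2_eq_square algebra_simps)
  finally show ?thesis .
qed

lemma qadd_qsub: "qadd c (qsub q c) = q"
  by (cases q, cases c) (simp add: qadd_def qsub_def)

lemma normA:
  assumes "qsub q qone \<in> I_ideal"
  shows "\<exists>K::int. qnorm q = of_int (1 + 4*K)"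
proof -
  from assms obtain x where x: "x \<in> H122" and qx: "qsub q qone = qmult (qscale 2 (qadd qone qi)) x"
    unfolding I_ideal_def by blast
  from H122_form[OF x] obtain e f g h :: int where
    xe: "x = Quat (real_of_int e + (real_of_int g + real_of_int h)/2) (real_of_int f + (real_of_int g + real_of_int h)/2) (real_of_int g * sqrt 2 / 2) (real_of_int h * sqrt 2 / 2)" by blast
  have q: "q = qadd (Quat 1 0 (0 * sqrt 2) 0) (qmult (qscale 2 (qadd qone qi)) x)"
    using qadd_qsub[of qone q] qx by (simp add: qone_def)
  have "qnorm q = 1 + 4 * of_int (e - f + 2*(e*e+f*f+(e+f)*(g+h)+g*g+h*h+g*h))"
    unfolding q xe by (subst norm_gen) (simp_all add: algebra_simps)
  then show ?thesis by (intro exI[of _ "e - f + 2*(e*e+f*f+(e+f)*(g+h)+g*g+h*h+g*h)"]) simp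
qed

lemma normB:
  assumes "qsub q (qadd qone (qscale 2 v3)) \<in> I_ideal"
  shows "\<exists>K::int. qnorm q = of_int (3 + 4*K)"
proof -
  from assms obtain x where x: "x \<in> H122" and qx: "qsub q (qadd qone (qscale 2 v3)) = qmult (qscale 2 (qadd qone qi)) x"
    unfolding I_ideal_def by blast
  from H122_form[OF x] obtain e f g h :: int where
    xe: "x = Quat (real_of_int e + (real_of_int g + real_of_int h)/2) (real_of_int f + (real_of_int g + real_of_int h)/2) (real_of_int g * sqrt 2 / 2) (real_of_int h * sqrt 2 / 2)" by blast
  have c: "qadd qone (qscale 2 v3) = Quat 2 1 (1 * sqrt 2) 0"
    by (simp add: qone_def qadd_def qscale_def v3_def qi_def qj_def)
  have q: "q = qadd (Quat 2 1 (1 * sqrt 2) 0) (qmult (qscale 2 (qadd qone qi)) x)"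
    using qadd_qsub[of "qadd qone (qscale 2 v3)" q] qx c by simp
  have "qnorm q = 3 + 4 * of_int (1 + 3*e - f + 2*g + 2*(e*e+f*f+(e+f)*(g+h)+g*g+h*h+g*h))"
    unfolding q xe by (subst norm_gen) (simp_all add: algebra_simps)
  then show ?thesis by (intro exI[of _ "1 + 3*e - f + 2*g + 2*(e*e+f*f+(e+f)*(g+h)+g*g+h*h+g*h)"]) simp
qed

theorem lemma50:
  fixes \<pi> :: quat and p :: int
  assumes "H_prime \<pi>" and "primary \<pi>"
    and "qnorm \<pi> = of_int p"
  shows "([p = 1] (mod 4) \<longrightarrow> pconj \<pi> = qconj \<pi>)
       \<and> ([p = - 1] (mod 4) \<longrightarrow> pconj \<pi> = qneg (qconj \<pi>))"
proof (cases "qsub \<pi> qone \<in> I_ideal")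
  case True
  then obtain K :: int where "qnorm \<pi> = of_int (1 + 4*K)" using normA by blast
  with assms(3) have p: "p = 1 + 4*K" by simp
  have "\<not> [p = - 1] (mod 4)" unfolding p cong_def by presburger
  then show ?thesis using True by (simp add: pconj_def)
next
  case False
  then have "qsub \<pi> (qadd qone (qscale 2 v3)) \<in> I_ideal" using assms(2) by (simp add: primary_def)
  then obtain K :: int where "qnorm \<pi> = of_int (3 + 4*K)" using normB by blast
  with assms(3) have p: "p = 3 + 4*K" by simp
  have "\<not> [p = 1] (mod 4)" unfolding p cong_def by presburger
  then show ?thesis using False by (simp add: pconj_def)
qed

end
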